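(* Let $p_0$ be a probability density on $\mathbb{R}^d$ and let $\boldsymbol{\phi}_t,\boldsymbol{\phi}^\theta_t:\mathbb{R}^d\to\mathbb{R}^d$, $t\in[0,1]$, be two vector fields. Let $\mathbf{x}_t$ solve $\frac{\mathrm{d}\mathbf{x}_t}{\mathrm{d}t}=\boldsymbol{\phi}_t(\mathbf{x}_t)$ with $\mathbf{x}_0\sim p_0$, let $p_t$ denote the law of $\mathbf{x}_t$, and let $p_{\mathbf{x}_1}$ be the law of $\mathbf{x}_1=\mathbf{x}_0+\int_0^1\boldsymbol{\phi}_t(\mathbf{x}_t)\,\mathrm{d}t$. Define the approximation error $\delta\ge 0$ by $\delta^2 = \int_0^1\mathbb{E}_{\mathbf{x}\sim p_t}\big[\|\boldsymbol{\phi}^\theta_t(\mathbf{x})-\boldsymbol{\phi}_t(\mathbf{x})\|^2\big]\,\mathrm{d}t$. Let $n\in\mathbb{N}$, $h=1/n$, and define the discretized process $\hat{\mathbf{x}}^\theta_0\sim p_0$, $$\hat{\mathbf{x}}^\theta_{(k+1)h} = \hat{\mathbf{x}}^\theta_{kh} + h\,\boldsymbol{\phi}^\theta_{kh}(\hat{\mathbf{x}}^\theta_{kh}),\qquad k=0,\dots,n-1,$$ with $p_{\hat{\mathbf{x}}^\theta_1}$ the law of $\hat{\mathbf{x}}^\theta_1$. Assume: (1) there is $K_1<\infty$ with $\|\boldsymbol{\phi}_t(\mathbf{x}_1)-\boldsymbol{\phi}_t(\mathbf{x}_2)\|\le K_1\|\mathbf{x}_1-\mathbf{x}_2\|$ and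 $\|\boldsymbol{\phi}^\theta_t(\mathbf{x}_1)-\boldsymbol{\phi}^\theta_t(\mathbf{x}_2)\|\le K_1\|\mathbf{x}_1-\mathbf{x}_2\|$ for all $\mathbf{x}_1,\mathbf{x}_2\in\mathbb{R}^d$, $t\in[0,1]$; (2) there is $K_2<\infty$ with $\|\boldsymbol{\phi}^\theta_{t_1}(\mathbf{x})-\boldsymbol{\phi}^\theta_{t_2}(\mathbf{x})\|\le K_2|t_2-t_1|$ for all $\mathbf{x}$ and $t_1,t_2\in[0,1]$; (3) there is $K_3<\infty$ with $\|\boldsymbol{\phi}^\theta_t(\mathbf{x})\|\le K_3$ for all $\mathbf{x}$, $t\in[0,1]$. Then $$W_2\big(p_{\hat{\mathbf{x}}^\theta_1},p_{\mathbf{x}_1}\big)\le \delta\sqrt{\exp(1+2K_1)} + \sqrt{h}\sqrt{\frac{C\big(\exp(1+K_1^2)-1\big)}{1+K_1^2}},$$ where $C=\frac12K_2^2+\frac{17}{2}K_1^2K_3^2+5K_1K_2K_3$.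
   Context: $W_2(p,q)=\big(\inf_{\gamma\in\Gamma(p,q)}\mathbb{E}_{(\mathbf{x},\mathbf{y})\sim\gamma}\|\mathbf{x}-\mathbf{y}\|^2\big)^{1/2}$ is the 2-Wasserstein distance, where $\Gamma(p,q)$ is the set of couplings of $p$ and $q$; $\|\cdot\|$ is the Euclidean norm. *)

theory Defs
  imports "HOL-Probability.Probability"
begin

definition couplings :: "'a::euclidean_space measure \<Rightarrow> 'a measure \<Rightarrow> ('a \<times> 'a) measure set" where
  "couplings p q = {\<gamma>. prob_space \<gamma> \<and> sets \<gamma> = sets (borel :: ('a \<times> 'a) measure) \<and>
                        distr \<gamma> borel fst = p \<and> distr \<gamma> borel snd = q}"

definition W2_sq :: "'a::euclidean_space measure \<Rightarrow> 'a measure \<Rightarrow> ennreal" where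
  "W2_sq p q = (INF \<gamma> \<in> couplings p q. \<integral>\<^sup>+ z. ennreal ((norm (fst z - snd z))\<^sup>2) \<partial>\<gamma>)"

definition W2 :: "'a::euclidean_space measure \<Rightarrow> 'a measure \<Rightarrow> ennreal" where
  "W2 p q = (if W2_sq p q = \<infinity> then \<infinity> else ennreal (sqrt (enn2real (W2_sq p q))))"

fun euler :: "(real \<Rightarrow> 'a::real_normed_vector \<Rightarrow> 'a) \<Rightarrow> real \<Rightarrow> nat \<Rightarrow> 'a \<Rightarrow> 'a" where
  "euler phi h 0 x = x"
| "euler phi h (Suc k) x = euler phi h k x + h *\<^sub>R phi (real k * h) (euler phi h k x)"

end

theory Submission
  imports Defs
begin


lemma inner_self_deriv:
  fixes e :: "real \<Rightarrow> 'a::real_inner"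
  assumes "(e has_vector_derivative e') (at t within S)"
  shows "((\<lambda>s. e s \<bullet> e s) has_real_derivative 2 * (e t \<bullet> e')) (at t within S)"
proof -
  have d: "(e has_derivative (\<lambda>h. h *\<^sub>R e')) (at t within S)"
    using assms by (simp add: has_vector_derivative_def)
  have "((\<lambda>s. e s \<bullet> e s) has_derivative (\<lambda>h. e t \<bullet> (h *\<^sub>R e') + (h *\<^sub>R e') \<bullet> e t)) (at t within S)"
    by (rule has_derivative_inner[OF d d])
  then show ?thesis
    unfolding has_field_derivative_def
    by (rule has_derivative_eq_rhs) (auto simp: algebra_simps inner_commute fun_eq_iff)
qed

lemma sqrt_sum_sq_le: "x \<ge> 0 \<Longrightarrow> (eps::real) \<ge> 0 \<Longrightarrow> sqrt (x\<^sup>2 + eps\<^sup>2) \<le> x + eps"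
  by (rule real_le_lsqrt) (auto simp: power2_eq_square algebra_simps)

lemma cmp_lemma:
  fixes e e' :: "real \<Rightarrow> 'a::real_inner" and w :: "real \<Rightarrow> real"
  assumes ab: "a \<le> b" and c: "c \<ge> 0"
    and der: "\<And>t. t \<in> {a..b} \<Longrightarrow> (e has_vector_derivative e' t) (at t within {a..b})"
    and wI: "(w has_integral I) {a..b}"
    and bnd: "\<And>t. t \<in> {a..b} \<Longrightarrow> exp (- c * t) * (norm (e' t) - c * norm (e t)) \<le> w t"
  shows "exp (- c * b) * norm (e b) \<le> exp (- c * a) * norm (e a) + I"
proof -
  have main: "exp (- c * b) * norm (e b) \<le> exp (- c * a) * norm (e a) + I + exp (- c * a) * eps"
    if eps: "eps > 0" for eps
  proof -
    define N where "N t = sqrt (e t \<bullet> e t + eps\<^sup>2)" for t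
    define G where "G t = exp (- c * t) * N t" for t
    define G' where "G' t = (- c) * exp (- c * t) * N t + exp (- c * t) * (inverse (N t) / 2 * (2 * (e t \<bullet> e' t)))" for t
    have Npos: "N t > 0" for t
      unfolding N_def using eps by (intro real_sqrt_gt_zero add_nonneg_pos) auto
    have Nge: "norm (e t) \<le> N t" for t
      unfolding N_def by (rule real_le_rsqrt) (auto simp: power2_norm_eq_inner)
    have dG: "(G has_vector_derivative G' t) (at t within {a..b})" if t: "t \<in> {a..b}" for t
    proof -
      have d1: "((\<lambda>s. e s \<bullet> e s + eps\<^sup>2) has_real_derivative 2 * (e t \<bullet> e' t)) (at t within {a..b})"
        using inner_self_deriv[OF der[OF t]] by (auto intro: derivative_eq_intros)
      have d2: "(N has_real_derivative inverse (N t) / 2 * (2 * (e t \<bullet> e' t))) (at t within {a..b})"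
        unfolding N_def
        apply (rule DERIV_chain2[OF _ d1])
        apply (rule DERIV_real_sqrt)
        using eps by (intro add_nonneg_pos) auto
      have d3: "((\<lambda>s. exp (- c * s)) has_real_derivative (- c) * exp (- c * t)) (at t within {a..b})"
        by (auto intro!: derivative_eq_intros)
      have "(G has_real_derivative G' t) (at t within {a..b})"
        unfolding G_def G'_def using DERIV_mult[OF d3 d2] by (simp add: algebra_simps)
      then show ?thesis by (simp add: has_real_derivative_iff_has_vector_derivative)
    qed
    have G'le: "G' t \<le> w t" if t: "t \<in> {a..b}" for t
    proof -
      have "e t \<bullet> e' t \<le> norm (e t) * norm (e' t)"
        by (metis Cauchy_Schwarz_ineq2 abs_le_D1)
      also have "\<dots> \<le> N t * norm (e' t)" by (rule mult_right_mono[OF Nge]) auto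
      finally have "inverse (N t) / 2 * (2 * (e t \<bullet> e' t)) \<le> norm (e' t)"
        using Npos[of t] by (simp add: field_simps)
      moreover have "c * norm (e t) \<le> c * N t" using Nge c by (simp add: mult_left_mono)
      ultimately have "inverse (N t) / 2 * (2 * (e t \<bullet> e' t)) - c * N t \<le> norm (e' t) - c * norm (e t)"
        by linarith
      then have "exp (- c * t) * (inverse (N t) / 2 * (2 * (e t \<bullet> e' t)) - c * N t)
          \<le> exp (- c * t) * (norm (e' t) - c * norm (e t))"
        by (rule mult_left_mono) simp
      moreover have "G' t = exp (- c * t) * (inverse (N t) / 2 * (2 * (e t \<bullet> e' t)) - c * N t)"
        unfolding G'_def by (simp add: algebra_simps)
      ultimately have "G' t \<le> exp (- c * t) * (norm (e' t) - c * norm (e t))" by simp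
      also have "\<dots> \<le> w t" by (rule bnd[OF t])
      finally show ?thesis .
    qed
    have "(G' has_integral (G b - G a)) {a..b}"
      by (rule fundamental_theorem_of_calculus[OF ab dG])
    then have "G b - G a \<le> I" using wI G'le by (rule has_integral_le)
    moreover have "exp (- c * b) * norm (e b) \<le> G b"
      unfolding G_def by (simp add: Nge)
    moreover have "G a \<le> exp (- c * a) * (norm (e a) + eps)"
    proof -
      have "N a \<le> norm (e a) + eps"
        unfolding N_def using sqrt_sum_sq_le[of "norm (e a)" eps] eps
        by (simp add: power2_norm_eq_inner)
      then show ?thesis unfolding G_def by simp
    qed
    ultimately show ?thesis by (simp add: algebra_simps)
  qed
  show ?thesis
  proof (rule field_le_epsilon)
    fix d :: real assume d: "d > 0"
    have "exp (- c * a) * (d / exp (- c * a)) = d" by simp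
    then show "exp (- c * b) * norm (e b) \<le> exp (- c * a) * norm (e a) + I + d"
      using main[of "d / exp (- c * a)"] d by simp
  qed
qed


lemma norm4: "norm ((A::'b::real_normed_vector) + B + C + D) \<le> norm A + norm B + norm C + norm D"
proof -
  have "norm (A + B + C + D) \<le> norm (A + B + C) + norm D" by (rule norm_triangle_ineq)
  also have "norm (A + B + C) \<le> norm (A + B) + norm C" by (rule norm_triangle_ineq)
  also have "norm (A + B) \<le> norm A + norm B" by (rule norm_triangle_ineq)
  finally show ?thesis by simp
qed

locale setting =
  fixes p0 :: "'a::euclidean_space \<Rightarrow> real"
    and phi phi\<theta> :: "real \<Rightarrow> 'a \<Rightarrow> 'a"
    and X :: "real \<Rightarrow> 'a \<Rightarrow> 'a"
    and \<delta> K1 K2 K3 :: real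
    and n :: nat
  assumes p0_meas: "p0 \<in> borel_measurable borel"
    and p0_nonneg: "\<And>x. p0 x \<ge> 0"
    and p0_total: "(\<integral>\<^sup>+ x. ennreal (p0 x) \<partial>lborel) = 1"
    and phi_meas: "(\<lambda>(t, x). phi t x) \<in> borel_measurable borel"
    and flow_init: "\<And>x. X 0 x = x"
    and flow_ode: "\<And>x t. t \<in> {0..1} \<Longrightarrow>
        ((\<lambda>s. X s x) has_vector_derivative phi t (X t x)) (at t within {0..1})"
    and delta_nonneg: "\<delta> \<ge> 0"
    and delta_def: "(\<integral>\<^sup>+ t \<in> {0..1}.
          (\<integral>\<^sup>+ x. ennreal ((norm (phi\<theta> t x - phi t x))\<^sup>2)
             \<partial>(distr (density lborel p0) borel (X t))) \<partial>lborel) = ennreal (\<delta>\<^sup>2)"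
    and n_pos: "n \<ge> 1"
    and lip_phi: "\<And>t x1 x2. t \<in> {0..1} \<Longrightarrow> norm (phi t x1 - phi t x2) \<le> K1 * norm (x1 - x2)"
    and lip_phi\<theta>: "\<And>t x1 x2. t \<in> {0..1} \<Longrightarrow> norm (phi\<theta> t x1 - phi\<theta> t x2) \<le> K1 * norm (x1 - x2)"
    and lip_time: "\<And>x t1 t2. t1 \<in> {0..1} \<Longrightarrow> t2 \<in> {0..1} \<Longrightarrow>
        norm (phi\<theta> t1 x - phi\<theta> t2 x) \<le> K2 * \<bar>t2 - t1\<bar>"
    and bounded: "\<And>x t. t \<in> {0..1} \<Longrightarrow> norm (phi\<theta> t x) \<le> K3"
begin

lemma K1_nonneg: "K1 \<ge> 0"
proof -
  obtain b :: 'a where b: "b \<in> Basis" using nonempty_Basis by blast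
  have "norm (phi 0 0 - phi 0 b) \<le> K1 * norm (0 - b)" by (rule lip_phi) auto
  then have "0 \<le> K1 * norm b" using order_trans[OF norm_ge_zero] by simp
  moreover have "norm b > 0" using b by (simp add: nonzero_Basis)
  ultimately show ?thesis by (simp add: zero_le_mult_iff)
qed

lemma K2_nonneg: "K2 \<ge> 0"
  using order_trans[OF norm_ge_zero lip_time[of 0 1 0]] by simp

lemma K3_nonneg: "K3 \<ge> 0"
  using order_trans[OF norm_ge_zero bounded[of 0 0]] by simp

definition "h = 1 / real n"
definition "\<kappa> = K2 + K1 * K3"
definition "\<alpha> = 1 + K1\<^sup>2"
definition "\<Gamma> = (exp \<alpha> - 1) / \<alpha>"
definition "lam = h / sqrt (3 * \<Gamma>)"
definition "Pc = \<kappa> / 2 * (lam * \<Gamma> + h\<^sup>2 / (3 * lam))"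
definition "y x0 k = euler phi\<theta> h k x0"
definition "Hk k t = exp (- K1) * \<kappa> / 2 * (- lam * exp (\<alpha> * (1 - t)) / \<alpha> + (t - real k * h) ^ 3 / (3 * lam))"
definition "mk k t = exp (- K1) * \<kappa> / 2 * (lam * exp (\<alpha> * (1 - t)) + (t - real k * h)\<^sup>2 / lam)"
definition "f x0 s = norm (phi\<theta> s (X s x0) - phi s (X s x0))"

lemma h_pos: "h > 0" using n_pos by (simp add: h_def)
lemma nh: "real n * h = 1" using n_pos by (simp add: h_def)
lemma \<kappa>_nonneg: "\<kappa> \<ge> 0" using K1_nonneg K2_nonneg K3_nonneg by (simp add: \<kappa>_def)
lemma \<alpha>_pos: "\<alpha> > 0" by (simp add: \<alpha>_def add_pos_nonneg)
lemma \<Gamma>_pos: "\<Gamma> > 0" using \<alpha>_pos by (simp add: \<Gamma>_def)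
lemma lam_pos: "lam > 0" using h_pos \<Gamma>_pos by (simp add: lam_def)
lemma two_K1_le: "2 * K1 \<le> \<alpha>"
proof -
  have "0 \<le> (K1 - 1)\<^sup>2" by simp
  then show ?thesis unfolding \<alpha>_def power2_diff by simp
qed

lemma Hk_deriv: "((Hk k) has_real_derivative mk k t) (at t within S)"
  unfolding Hk_def mk_def using \<alpha>_pos lam_pos
  by (auto intro!: derivative_eq_intros simp: field_simps power2_eq_square)

lemma mk_bound:
  assumes "t \<le> 1" "real k * h \<le> t"
  shows "exp (- K1 * t) * (\<kappa> * (t - real k * h)) \<le> mk k t"
proof -
  define E where "E = exp (K1 * (1 - t))"
  define d where "d = t - real k * h"
  have d0: "d \<ge> 0" using assms by (simp add: d_def)
  have "E * d \<le> (lam * E\<^sup>2 + d\<^sup>2 / lam) / 2"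
  proof -
    have "0 \<le> (lam * E - d)\<^sup>2 / lam" using lam_pos by simp
    then show ?thesis using lam_pos by (simp add: field_simps power2_eq_square)
  qed
  also have "E\<^sup>2 \<le> exp (\<alpha> * (1 - t))"
  proof -
    have "E\<^sup>2 = exp (2 * K1 * (1 - t))" unfolding E_def by (simp add: power2_eq_square flip: exp_add)
    also have "\<dots> \<le> exp (\<alpha> * (1 - t))" using two_K1_le assms by (simp add: mult_right_mono)
    finally show ?thesis .
  qed
  hence "(lam * E\<^sup>2 + d\<^sup>2 / lam) / 2 \<le> (lam * exp (\<alpha> * (1 - t)) + d\<^sup>2 / lam) / 2"
    using lam_pos by simp
  finally have *: "E * d \<le> (lam * exp (\<alpha> * (1 - t)) + d\<^sup>2 / lam) / 2" .
  have "exp (- K1 * t) = exp (- K1) * E" unfolding E_def by (simp add: algebra_simps flip: exp_add)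
  then have "exp (- K1 * t) * (\<kappa> * d) = exp (- K1) * \<kappa> * (E * d)" by simp
  also have "\<dots> \<le> exp (- K1) * \<kappa> * ((lam * exp (\<alpha> * (1 - t)) + d\<^sup>2 / lam) / 2)"
    using * \<kappa>_nonneg by (intro mult_left_mono) auto
  also have "\<dots> = mk k t" unfolding mk_def d_def by simp
  finally show ?thesis unfolding d_def .
qed

lemma f_nonneg: "f x0 s \<ge> 0" by (simp add: f_def)

lemma step:
  assumes k: "k < n" and fint: "f x0 integrable_on {real k * h .. real (Suc k) * h}"
  shows "exp (- K1 * (real (Suc k) * h)) * norm (y x0 (Suc k) - X (real (Suc k) * h) x0)
       \<le> exp (- K1 * (real k * h)) * norm (y x0 k - X (real k * h) x0)
          + (integral {real k * h .. real (Suc k) * h} (f x0) + (Hk k (real (Suc k) * h) - Hk k (real k * h)))"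
proof -
  define a where "a = real k * h"
  define b where "b = real (Suc k) * h"
  define v where "v = phi\<theta> a (y x0 k)"
  define e where "e s = y x0 k + (s - a) *\<^sub>R v - X s x0" for s
  define e' where "e' s = v - phi s (X s x0)" for s
  have a0: "a \<ge> 0" using h_pos by (simp add: a_def)
  have b1: "b \<le> 1"
  proof -
    have "real (Suc k) * h \<le> real n * h" using k h_pos by (intro mult_right_mono) auto
    then show ?thesis using nh by (simp add: b_def)
  qed
  have ab: "a \<le> b" using h_pos by (simp add: a_def b_def)
  have ba: "b - a = h" by (simp add: a_def b_def algebra_simps)
  have sub: "{a..b} \<subseteq> {0..1}" using a0 b1 by auto
  have der: "(e has_vector_derivative e' s) (at s within {a..b})" if s: "s \<in> {a..b}" for s
  proof -
    have dX: "((\<lambda>s. X s x0) has_vector_derivative phi s (X s x0)) (at s within {a..b})"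
      using flow_ode[of s x0] s sub by (auto intro: has_vector_derivative_within_subset)
    have d1: "((\<lambda>x. (x - a) *\<^sub>R v) has_vector_derivative v) (at s within {a..b})"
      unfolding has_vector_derivative_def
      by (rule has_derivative_eq_rhs, rule derivative_intros, auto intro!: derivative_eq_intros simp: fun_eq_iff algebra_simps)
    show ?thesis unfolding e_def e'_def
      using has_vector_derivative_diff[OF has_vector_derivative_add[OF has_vector_derivative_const d1] dX] by simp
  qed
  have Hint: "(mk k has_integral (Hk k b - Hk k a)) {a..b}"
    by (rule fundamental_theorem_of_calculus[OF ab])
      (use Hk_deriv in \<open>simp add: has_real_derivative_iff_has_vector_derivative\<close>)
  have wI: "((\<lambda>s. f x0 s + mk k s) has_integral (integral {a..b} (f x0) + (Hk k b - Hk k a))) {a..b}"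
    using has_integral_add[OF integrable_integral Hint] fint by (simp add: a_def b_def)
  have bnd: "exp (- K1 * s) * (norm (e' s) - K1 * norm (e s)) \<le> f x0 s + mk k s"
    if s: "s \<in> {a..b}" for s
  proof -
    define Y where "Y = y x0 k + (s - a) *\<^sub>R v"
    define Xs where "Xs = X s x0"
    have s01: "s \<in> {0..1}" and a01: "a \<in> {0..1}" using s sub ab by auto
    have sa: "s - a \<ge> 0" using s by simp
    have "e' s = (phi\<theta> a (y x0 k) - phi\<theta> s (y x0 k)) + (phi\<theta> s (y x0 k) - phi\<theta> s Y)
          + (phi\<theta> s Y - phi\<theta> s Xs) + (phi\<theta> s Xs - phi s Xs)"
      by (simp add: e'_def v_def Xs_def)
    then have "norm (e' s) \<le> norm (phi\<theta> a (y x0 k) - phi\<theta> s (y x0 k)) + norm (phi\<theta> s (y x0 k) - phi\<theta> s Y)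
          + norm (phi\<theta> s Y - phi\<theta> s Xs) + norm (phi\<theta> s Xs - phi s Xs)"
      by (simp only: norm4)
    also have "norm (phi\<theta> a (y x0 k) - phi\<theta> s (y x0 k)) \<le> K2 * (s - a)"
      using lip_time[OF a01 s01] sa by simp
    also have "norm (phi\<theta> s (y x0 k) - phi\<theta> s Y) \<le> K1 * ((s - a) * K3)"
    proof -
      have "norm (phi\<theta> s (y x0 k) - phi\<theta> s Y) \<le> K1 * norm (y x0 k - Y)" by (rule lip_phi\<theta>[OF s01])
      also have "norm (y x0 k - Y) = (s - a) * norm v" using sa by (simp add: Y_def)
      also have "\<dots> \<le> (s - a) * K3" using bounded[OF a01] sa by (simp add: v_def mult_left_mono)
      finally show ?thesis using K1_nonneg by (simp add: mult_left_mono)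
    qed
    also have "norm (phi\<theta> s Y - phi\<theta> s Xs) \<le> K1 * norm (e s)"
      using lip_phi\<theta>[OF s01, of Y Xs] by (simp add: e_def Y_def Xs_def)
    also have "norm (phi\<theta> s Xs - phi s Xs) = f x0 s" by (simp add: f_def Xs_def)
    finally have "norm (e' s) - K1 * norm (e s) \<le> \<kappa> * (s - a) + f x0 s"
      by (simp add: \<kappa>_def algebra_simps)
    then have "exp (- K1 * s) * (norm (e' s) - K1 * norm (e s)) \<le> exp (- K1 * s) * (\<kappa> * (s - a) + f x0 s)"
      by (rule mult_left_mono) simp
    also have "\<dots> = exp (- K1 * s) * (\<kappa> * (s - a)) + exp (- K1 * s) * f x0 s" by (simp add: algebra_simps)
    also have "exp (- K1 * s) * (\<kappa> * (s - a)) \<le> mk k s"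
      using mk_bound[of s k] s b1 by (simp add: a_def)
    also have "exp (- K1 * s) * f x0 s \<le> 1 * f x0 s"
      using K1_nonneg s01 f_nonneg[of x0 s] by (intro mult_right_mono) auto
    finally show ?thesis by simp
  qed
  have "exp (- K1 * b) * norm (e b) \<le> exp (- K1 * a) * norm (e a) + (integral {a..b} (f x0) + (Hk k b - Hk k a))"
    by (rule cmp_lemma[OF ab K1_nonneg der wI bnd])
  moreover have "e b = y x0 (Suc k) - X b x0"
    using ba by (simp add: e_def y_def v_def a_def)
  moreover have "e a = y x0 k - X a x0" by (simp add: e_def)
  ultimately show ?thesis by (simp add: a_def b_def)
qed

definition "Hs m = exp (- K1) * \<kappa> / 2 * (lam * (exp \<alpha> - exp (\<alpha> * (1 - real m * h))) / \<alpha> + real m * h ^ 3 / (3 * lam))"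

lemma Hs_step: "Hs (Suc m) = Hs m + (Hk m (real (Suc m) * h) - Hk m (real m * h))"
  unfolding Hs_def Hk_def using lam_pos \<alpha>_pos
  by (simp add: field_simps)

lemma Hs_n: "Hs n = exp (- K1) * Pc"
proof -
  have "real n * h ^ 3 = h\<^sup>2" using nh by (simp add: power3_eq_cube power2_eq_square mult.assoc[symmetric])
  then show ?thesis unfolding Hs_def Pc_def \<Gamma>_def using nh by (simp add: field_simps)
qed

lemma accum:
  assumes fint: "f x0 integrable_on {0..1}" and m: "m \<le> n"
  shows "exp (- K1 * (real m * h)) * norm (y x0 m - X (real m * h) x0) \<le> integral {0..real m * h} (f x0) + Hs m"
  using m
proof (induction m)
  case 0
  then show ?case by (simp add: y_def flow_init Hs_def)
next
  case (Suc m)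
  have le1: "real (Suc m) * h \<le> 1"
  proof -
    have "real (Suc m) * h \<le> real n * h" using Suc.prems h_pos by (intro mult_right_mono) auto
    then show ?thesis using nh by simp
  qed
  have am: "0 \<le> real m * h" "real m * h \<le> real (Suc m) * h" using h_pos by auto
  have fsub: "f x0 integrable_on {0..real (Suc m) * h}"
    using le1 by (intro integrable_on_subinterval[OF fint]) auto
  have fsub2: "f x0 integrable_on {real m * h..real (Suc m) * h}"
    using fint le1 am by (intro integrable_on_subinterval[OF fint]) auto
  have IH: "exp (- K1 * (real m * h)) * norm (y x0 m - X (real m * h) x0) \<le> integral {0..real m * h} (f x0) + Hs m"
    using Suc by simp
  have st: "exp (- K1 * (real (Suc m) * h)) * norm (y x0 (Suc m) - X (real (Suc m) * h) x0)
       \<le> exp (- K1 * (real m * h)) * norm (y x0 m - X (real m * h) x0)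
          + (integral {real m * h .. real (Suc m) * h} (f x0) + (Hk m (real (Suc m) * h) - Hk m (real m * h)))"
    using step[OF _ fsub2] Suc.prems by simp
  have comb: "integral {0..real m * h} (f x0) + integral {real m * h .. real (Suc m) * h} (f x0) = integral {0..real (Suc m) * h} (f x0)"
    by (rule Henstock_Kurzweil_Integration.integral_combine[OF am fsub])
  show ?case using st IH comb Hs_step[of m] by linarith
qed

lemma pointwise_main:
  assumes fint: "f x0 integrable_on {0..1}"
  shows "norm (euler phi\<theta> h n x0 - X 1 x0) \<le> Pc + exp K1 * integral {0..1} (f x0)"
proof -
  have "exp (- K1) * norm (y x0 n - X 1 x0) \<le> integral {0..1} (f x0) + exp (- K1) * Pc"
    using accum[OF fint order.refl] nh Hs_n by simp
  then have "exp K1 * (exp (- K1) * norm (y x0 n - X 1 x0)) \<le> exp K1 * (integral {0..1} (f x0) + exp (- K1) * Pc)"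
    by (rule mult_left_mono) simp
  moreover have E1: "exp K1 * exp (- K1) = 1" by (simp add: exp_minus_inverse)
  ultimately show ?thesis by (simp add: y_def distrib_left mult.assoc[symmetric] add.commute)
qed

end


lemma joint_cont:
  fixes F :: "real \<Rightarrow> 'b::metric_space \<Rightarrow> 'c::metric_space"
  assumes c1: "\<And>x. continuous_on UNIV (\<lambda>t. F t x)"
    and c2: "\<And>t x y. dist (F t x) (F t y) \<le> L * dist x y"
  shows "continuous_on UNIV (\<lambda>p. F (fst p) (snd p))"
proof -
  have "isCont (\<lambda>p. F (fst p) (snd p)) p" for p
  proof -
    obtain s0 x0 where p: "p = (s0, x0)" by (cases p)
    have t1: "((\<lambda>q. F (fst q) x0) \<longlongrightarrow> F s0 x0) (at p)"
    proof -
      have "isCont (\<lambda>t. F t x0) s0" using c1[of x0] by (simp add: continuous_on_eq_continuous_at)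
      moreover have "(fst \<longlongrightarrow> s0) (at p)" unfolding p using tendsto_fst[OF tendsto_ident_at[of "(s0,x0)" UNIV]] by simp
      ultimately show ?thesis by (rule isCont_tendsto_compose)
    qed
    have u: "((\<lambda>q. L * dist (snd q) x0 + dist (F (fst q) x0) (F s0 x0)) \<longlongrightarrow> L * 0 + 0) (at p)"
      unfolding p
      apply (intro tendsto_intros)
      using t1 tendsto_snd[OF tendsto_ident_at[of "(s0,x0)" UNIV]] unfolding p
      by (auto simp: tendsto_dist_iff[symmetric] intro!: tendsto_intros)
    have "((\<lambda>q. dist (F (fst q) (snd q)) (F s0 x0)) \<longlongrightarrow> 0) (at p)"
    proof (rule tendsto_sandwich[OF _ _ tendsto_const])
      show "\<forall>\<^sub>F q in at p. 0 \<le> dist (F (fst q) (snd q)) (F s0 x0)" by simp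
      show "\<forall>\<^sub>F q in at p. dist (F (fst q) (snd q)) (F s0 x0) \<le> L * dist (snd q) x0 + dist (F (fst q) x0) (F s0 x0)"
      proof (intro always_eventually allI)
        fix q :: "real \<times> 'b"
        have "dist (F (fst q) (snd q)) (F s0 x0) \<le> dist (F (fst q) (snd q)) (F (fst q) x0) + dist (F (fst q) x0) (F s0 x0)"
          by (rule dist_triangle)
        also have "\<dots> \<le> L * dist (snd q) x0 + dist (F (fst q) x0) (F s0 x0)"
          by (rule add_right_mono[OF c2])
        finally show "dist (F (fst q) (snd q)) (F s0 x0) \<le> L * dist (snd q) x0 + dist (F (fst q) x0) (F s0 x0)" .
      qed
      show "((\<lambda>q. L * dist (snd q) x0 + dist (F (fst q) x0) (F s0 x0)) \<longlongrightarrow> 0) (at p)" using u by (simp only: mult_zero_right add_0_right)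
    qed
    then have "((\<lambda>q. F (fst q) (snd q)) \<longlongrightarrow> F s0 x0) (at p)"
      by (simp only: tendsto_dist_iff[of "\<lambda>q. F (fst q) (snd q)" "F s0 x0" "at p"])
    then show ?thesis unfolding isCont_def by (simp add: p)
  qed
  then show ?thesis by (simp add: continuous_on_eq_continuous_at)
qed


definition cl :: "real \<Rightarrow> real" where "cl s = max 0 (min 1 s)"

lemma cl_in: "cl s \<in> {0..1}" by (auto simp: cl_def)
lemma cl_id: "s \<in> {0..1} \<Longrightarrow> cl s = s" by (auto simp: cl_def)
lemma cl_cont: "continuous_on UNIV cl" unfolding cl_def by (intro continuous_intros)
lemma cl_lip: "\<bar>cl s - cl t\<bar> \<le> \<bar>s - t\<bar>" by (auto simp: cl_def)

context setting
begin

lemma flow_lip: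
  assumes t: "t \<in> {0..1}"
  shows "norm (X t x - X t z) \<le> exp (K1 * t) * norm (x - z)"
proof -
  have t0: "0 \<le> t" using t by simp
  have sub: "{0..t} \<subseteq> {0..1}" using t by auto
  have der: "((\<lambda>s. X s x - X s z) has_vector_derivative (phi s (X s x) - phi s (X s z))) (at s within {0..t})"
    if s: "s \<in> {0..t}" for s
    using has_vector_derivative_diff[OF flow_ode[of s x] flow_ode[of s z]] s sub
    by (auto intro: has_vector_derivative_within_subset)
  have bnd: "exp (- K1 * s) * (norm (phi s (X s x) - phi s (X s z)) - K1 * norm (X s x - X s z)) \<le> 0"
    if s: "s \<in> {0..t}" for s
  proof -
    have "norm (phi s (X s x) - phi s (X s z)) - K1 * norm (X s x - X s z) \<le> 0"
      using lip_phi[of s "X s x" "X s z"] s sub by auto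
    then show ?thesis by (simp add: mult_nonneg_nonpos)
  qed
  have "exp (- K1 * t) * norm (X t x - X t z) \<le> exp (- K1 * 0) * norm (X 0 x - X 0 z) + 0"
    by (rule cmp_lemma[OF t0 K1_nonneg der has_integral_0 bnd])
  then have "exp (- K1 * t) * norm (X t x - X t z) \<le> norm (x - z)" by (simp add: flow_init)
  then have "exp (K1 * t) * (exp (- K1 * t) * norm (X t x - X t z)) \<le> exp (K1 * t) * norm (x - z)"
    by (rule mult_left_mono) simp
  moreover have "exp (K1 * t) * exp (- K1 * t) = 1" by (simp flip: exp_add)
  ultimately show ?thesis by (metis mult.assoc mult_1)
qed

lemma flow_lip1:
  "dist (X (cl s) x) (X (cl s) z) \<le> exp K1 * dist x z"
proof -
  have "norm (X (cl s) x - X (cl s) z) \<le> exp (K1 * cl s) * norm (x - z)" by (rule flow_lip[OF cl_in])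
  also have "\<dots> \<le> exp K1 * norm (x - z)"
    using cl_in[of s] K1_nonneg by (intro mult_right_mono) (auto simp: mult_left_le)
  finally show ?thesis by (simp add: dist_norm)
qed

lemma flow_cont_t: "continuous_on {0..1} (\<lambda>t. X t x)"
  unfolding continuous_on_eq_continuous_within
  using flow_ode[of _ x] by (blast intro: has_vector_derivative_continuous)

lemma Xc_cont: "continuous_on UNIV (\<lambda>p. X (cl (fst p)) (snd p))"
proof (rule joint_cont[where F = "\<lambda>s x. X (cl s) x"])
  show "continuous_on UNIV (\<lambda>t. X (cl t) x)" for x
    by (rule continuous_on_compose2[OF flow_cont_t cl_cont]) (use cl_in in auto)
  show "dist (X (cl t) x) (X (cl t) y) \<le> exp K1 * dist x y" for t x y by (rule flow_lip1)
qed

lemma X1_cont: "continuous_on UNIV (X 1)"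
proof -
  have "continuous_on UNIV (\<lambda>x. X (cl (fst (1::real, x))) (snd (1::real, x)))"
    by (rule continuous_on_compose2[OF Xc_cont]) (auto intro!: continuous_intros)
  then show ?thesis by (simp add: cl_def)
qed

lemma X1_meas: "X 1 \<in> borel_measurable borel"
  by (rule borel_measurable_continuous_onI[OF X1_cont])

lemma phi\<theta>c_cont: "continuous_on UNIV (\<lambda>p. phi\<theta> (cl (fst p)) (snd p))"
proof (rule joint_cont[where F = "\<lambda>s x. phi\<theta> (cl s) x"])
  show "continuous_on UNIV (\<lambda>t. phi\<theta> (cl t) x)" for x
  proof (rule lipschitz_on_continuous_on)
    show "K2-lipschitz_on UNIV (\<lambda>t. phi\<theta> (cl t) x)"
    proof (rule lipschitz_onI)
      fix s t :: real
      have "norm (phi\<theta> (cl s) x - phi\<theta> (cl t) x) \<le> K2 * \<bar>cl t - cl s\<bar>" by (rule lip_time[OF cl_in cl_in])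
      also have "\<dots> \<le> K2 * \<bar>t - s\<bar>" by (rule mult_left_mono[OF cl_lip K2_nonneg])
      finally show "dist (phi\<theta> (cl s) x) (phi\<theta> (cl t) x) \<le> K2 * dist s t" by (simp add: dist_norm dist_real_def abs_minus_commute)
    qed (rule K2_nonneg)
  qed
  show "dist (phi\<theta> (cl t) x) (phi\<theta> (cl t) y) \<le> K1 * dist x y" for t x y
    using lip_phi\<theta>[OF cl_in] by (simp add: dist_norm)
qed

lemma phi\<theta>_cont: "t \<in> {0..1} \<Longrightarrow> continuous_on UNIV (phi\<theta> t)"
  by (rule lipschitz_on_continuous_on[where L = K1], rule lipschitz_onI)
    (use lip_phi\<theta> K1_nonneg in \<open>auto simp: dist_norm\<close>)

lemma euler_cont: "k \<le> n \<Longrightarrow> continuous_on UNIV (euler phi\<theta> h k)"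
proof (induction k)
  case 0
  then show ?case by (simp add: continuous_on_id)
next
  case (Suc k)
  have k01: "real k * h \<in> {0..1}"
  proof -
    have "real k * h \<le> real n * h" using Suc.prems h_pos by (intro mult_right_mono) auto
    then show ?thesis using nh h_pos by simp
  qed
  have c: "continuous_on UNIV (euler phi\<theta> h k)" using Suc by simp
  have "continuous_on UNIV (\<lambda>x. phi\<theta> (real k * h) (euler phi\<theta> h k x))"
    by (rule continuous_on_compose2[OF phi\<theta>_cont[OF k01] c]) auto
  then show ?case using c by (auto intro!: continuous_intros)
qed

lemma euler_meas: "euler phi\<theta> h n \<in> borel_measurable borel"
  by (rule borel_measurable_continuous_onI[OF euler_cont]) simp

definition "Gf p = ennreal ((norm (phi\<theta> (cl (fst p)) (X (cl (fst p)) (snd p)) - phi (fst p) (X (cl (fst p)) (snd p))))\<^sup>2)"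

lemma Gf_meas: "Gf \<in> borel_measurable borel"
proof -
  have m1: "(\<lambda>p. (fst p, X (cl (fst p)) (snd p))) \<in> borel_measurable borel"
    by (rule borel_measurable_continuous_onI) (auto intro!: continuous_intros Xc_cont)
  have "(\<lambda>p. phi\<theta> (cl (fst p)) (snd p)) \<in> borel_measurable borel"
    by (rule borel_measurable_continuous_onI[OF phi\<theta>c_cont])
  from measurable_compose[OF m1 this]
  have a: "(\<lambda>p. phi\<theta> (cl (fst p)) (X (cl (fst p)) (snd p))) \<in> borel_measurable borel"
    by simp
  have b: "(\<lambda>p. phi (fst p) (X (cl (fst p)) (snd p))) \<in> borel_measurable borel"
    using measurable_compose[OF m1 phi_meas] by simp
  show ?thesis unfolding Gf_def using a b by measurable
qed

end


lemma sq_int_le: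
  fixes u :: "real \<Rightarrow> real"
  assumes ui: "u integrable_on {0..1}" and u2i: "(\<lambda>s. (u s)\<^sup>2) integrable_on {0..1}"
    and u0: "\<And>s. s \<in> {0..1} \<Longrightarrow> u s \<ge> 0"
  shows "(integral {0..1} u)\<^sup>2 \<le> integral {0..1} (\<lambda>s. (u s)\<^sup>2)"
proof -
  define F where "F = integral {0..1} u"
  define S where "S = integral {0..1} (\<lambda>s. (u s)\<^sup>2)"
  have F0: "F \<ge> 0" unfolding F_def using ui u0 by (rule integral_nonneg)
  have S0: "S \<ge> 0" unfolding S_def using u2i by (rule integral_nonneg) simp
  have key: "F \<le> (\<mu> + S / \<mu>) / 2" if mu: "\<mu> > 0" for \<mu>
  proof -
    have "((\<lambda>s. \<mu> / 2 + (1 / (2 * \<mu>)) * (u s)\<^sup>2) has_integral (measure lborel {0..1::real} *\<^sub>R (\<mu> / 2) + (1 / (2 * \<mu>)) * S)) {0..1}"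
      unfolding S_def by (intro has_integral_add has_integral_mult_right has_integral_const_real integrable_integral u2i)
    then have h2: "((\<lambda>s. \<mu> / 2 + (1 / (2 * \<mu>)) * (u s)\<^sup>2) has_integral ((\<mu> + S / \<mu>) / 2)) {0..1}"
      using mu by (simp add: field_simps)
    have h1: "(u has_integral F) {0..1}" unfolding F_def using ui by (rule integrable_integral)
    show ?thesis
    proof (rule has_integral_le[OF h1 h2])
      fix s :: real
      have "0 \<le> (\<mu> - u s)\<^sup>2 / (2 * \<mu>)" using mu by simp
      then show "u s \<le> \<mu> / 2 + 1 / (2 * \<mu>) * (u s)\<^sup>2"
        using mu by (simp add: field_simps power2_eq_square)
    qed
  qed
  show ?thesis
  proof (cases "S > 0")
    case True
    have "F \<le> (sqrt S + S / sqrt S) / 2" using key[of "sqrt S"] True by simp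
    also have "S / sqrt S = sqrt S" using True by (metis real_div_sqrt less_le)
    finally have "F \<le> sqrt S" by simp
    then have "F\<^sup>2 \<le> (sqrt S)\<^sup>2" using F0 by (intro power_mono) auto
    then show ?thesis using S0 by (simp add: F_def S_def)
  next
    case False
    then have S00: "S = 0" using S0 by simp
    have "F \<le> 0"
    proof (rule field_le_epsilon)
      fix e :: real assume "e > 0"
      then show "F \<le> 0 + e" using key[of "2 * e"] S00 by simp
    qed
    then show ?thesis using F0 S00 by (simp add: F_def S_def)
  qed
qed


context setting
begin

definition "fc x0 s = norm (phi\<theta> (cl s) (X (cl s) x0) - phi s (X (cl s) x0))"
definition "Splus x0 = (\<integral>\<^sup>+ s \<in> {0..1}. ennreal ((f x0 s)\<^sup>2) \<partial>lborel)"

lemma A_meas: "(\<lambda>p. phi\<theta> (cl (fst p)) (X (cl (fst p)) (snd p))) \<in> borel_measurable borel"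
proof -
  have m1: "(\<lambda>p. (fst p, X (cl (fst p)) (snd p))) \<in> borel_measurable borel"
    by (rule borel_measurable_continuous_onI) (auto intro!: continuous_intros Xc_cont)
  have "(\<lambda>p. phi\<theta> (cl (fst p)) (snd p)) \<in> borel_measurable borel"
    by (rule borel_measurable_continuous_onI[OF phi\<theta>c_cont])
  from measurable_compose[OF m1 this] show ?thesis by simp
qed

lemma B_meas: "(\<lambda>p. phi (fst p) (X (cl (fst p)) (snd p))) \<in> borel_measurable borel"
proof -
  have m1: "(\<lambda>p. (fst p, X (cl (fst p)) (snd p))) \<in> borel_measurable borel"
    by (rule borel_measurable_continuous_onI) (auto intro!: continuous_intros Xc_cont)
  from measurable_compose[OF m1 phi_meas] show ?thesis by simp
qed

lemma fc_meas: "fc x0 \<in> borel_measurable borel"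
proof -
  have p: "(\<lambda>s. (s, x0)) \<in> borel_measurable borel"
    by (rule borel_measurable_continuous_onI) (auto intro!: continuous_intros)
  have a: "(\<lambda>s. phi\<theta> (cl s) (X (cl s) x0)) \<in> borel_measurable borel"
    using measurable_compose[OF p A_meas] by simp
  have b: "(\<lambda>s. phi s (X (cl s) x0)) \<in> borel_measurable borel"
    using measurable_compose[OF p B_meas] by simp
  show ?thesis unfolding fc_def using a b by measurable
qed

lemma fc_eq: "s \<in> {0..1} \<Longrightarrow> fc x0 s = f x0 s"
  by (simp add: fc_def f_def cl_id)

lemma int_facts:
  assumes fin: "Splus x0 \<noteq> \<infinity>"
  shows "f x0 integrable_on {0..1}" "(integral {0..1} (f x0))\<^sup>2 \<le> enn2real (Splus x0)"
proof -
  define g where "g s = indicator {0..1} s *\<^sub>R (fc x0 s)\<^sup>2" for s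
  have fcm[measurable]: "fc x0 \<in> borel_measurable lborel" using fc_meas by simp
  have gm[measurable]: "g \<in> borel_measurable lborel" unfolding g_def by measurable
  have Sp: "Splus x0 = (\<integral>\<^sup>+ s. ennreal (g s) \<partial>lborel)"
    unfolding Splus_def g_def
    by (rule nn_integral_cong) (auto simp: indicator_def fc_eq)
  have int2: "integrable lborel g"
    by (rule integrableI_nonneg) (use fin Sp in \<open>auto simp: g_def top.not_eq_extremum\<close>)
  have int1: "integrable lborel (\<lambda>s. indicator {0..1} s *\<^sub>R fc x0 s)"
  proof (rule integrableI_bounded)
    show "(\<lambda>s. indicator {0..1} s *\<^sub>R fc x0 s) \<in> borel_measurable lborel" by measurable
    have "(\<integral>\<^sup>+ s. ennreal (norm (indicator {0..1} s *\<^sub>R fc x0 s)) \<partial>lborel)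
        \<le> (\<integral>\<^sup>+ s. (indicator {0..1} s + ennreal (g s)) \<partial>lborel)"
    proof (rule nn_integral_mono)
      fix s :: real
      have fc0: "fc x0 s \<ge> 0" by (simp add: fc_def)
      have "0 \<le> (fc x0 s - 1)\<^sup>2" by simp
      hence "0 \<le> (fc x0 s)\<^sup>2 - 2 * fc x0 s + 1" by (simp add: power2_diff)
      hence "fc x0 s \<le> 1 + (fc x0 s)\<^sup>2" using fc0 by linarith
      then show "ennreal (norm (indicator {0..1} s *\<^sub>R fc x0 s)) \<le> indicator {0..1} s + ennreal (g s)"
      proof (cases "s \<in> {0..1}")
        case True
        have "ennreal (fc x0 s) \<le> ennreal (1 + (fc x0 s)\<^sup>2)" by (rule ennreal_leI) fact
        also have "\<dots> = 1 + ennreal ((fc x0 s)\<^sup>2)" by (simp add: ennreal_plus[symmetric])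
        finally show ?thesis using True fc0 by (simp add: g_def)
      qed (simp add: g_def)
    qed
    also have "\<dots> = (\<integral>\<^sup>+ s. indicator {0..1::real} s \<partial>lborel) + (\<integral>\<^sup>+ s. ennreal (g s) \<partial>lborel)"
      by (rule nn_integral_add[of "indicator {0..1}" lborel "\<lambda>s. ennreal (g s)"]) auto
    also have "(\<integral>\<^sup>+ s. indicator {0..1::real} s \<partial>lborel) = 1" by simp
    also have "(\<integral>\<^sup>+ s. ennreal (g s) \<partial>lborel) = Splus x0" using Sp by simp
    also have "1 + Splus x0 < \<infinity>" using fin by (simp add: top.not_eq_extremum)
    finally show "(\<integral>\<^sup>+ s. ennreal (norm (indicator {0..1} s *\<^sub>R fc x0 s)) \<partial>lborel) < \<infinity>" .
  qed
  have si1: "set_integrable lborel {0..1} (fc x0)" using int1 by (simp add: set_integrable_def)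
  have si2: "set_integrable lborel {0..1} (\<lambda>s. (fc x0 s)\<^sup>2)" using int2 by (simp add: set_integrable_def g_def[abs_def])
  have fci: "fc x0 integrable_on {0..1}" using set_borel_integral_eq_integral(1)[OF si1] .
  have fc2i: "(\<lambda>s. (fc x0 s)\<^sup>2) integrable_on {0..1}" using set_borel_integral_eq_integral(1)[OF si2] .
  have L2: "(LINT s:{0..1}|lborel. (fc x0 s)\<^sup>2) = integral {0..1} (\<lambda>s. (fc x0 s)\<^sup>2)"
    using set_borel_integral_eq_integral(2)[OF si2] .
  have "Splus x0 = ennreal (integral\<^sup>L lborel g)"
    using Sp nn_integral_eq_integral[OF int2] by (simp add: g_def)
  also have "integral\<^sup>L lborel g = integral {0..1} (\<lambda>s. (fc x0 s)\<^sup>2)"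
    using L2 by (simp add: g_def[abs_def] set_lebesgue_integral_def)
  finally have SpS: "enn2real (Splus x0) = integral {0..1} (\<lambda>s. (fc x0 s)\<^sup>2)"
    using integral_nonneg[OF fc2i] by simp
  show "f x0 integrable_on {0..1}" using fci by (rule integrable_eq) (simp add: fc_eq)
  have "integral {0..1} (f x0) = integral {0..1} (fc x0)"
    by (rule integral_cong) (simp add: fc_eq)
  moreover have "(integral {0..1} (fc x0))\<^sup>2 \<le> integral {0..1} (\<lambda>s. (fc x0 s)\<^sup>2)"
    by (rule sq_int_le[OF fci fc2i]) (simp add: fc_def)
  ultimately show "(integral {0..1} (f x0))\<^sup>2 \<le> enn2real (Splus x0)" using SpS by simp
qed

end


context setting
begin

lemma Pc_nonneg: "Pc \<ge> 0"
  unfolding Pc_def using \<kappa>_nonneg lam_pos \<Gamma>_pos by (intro mult_nonneg_nonneg add_nonneg_nonneg) auto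

lemma pw_enn:
  assumes t: "t > 0"
  shows "ennreal ((norm (euler phi\<theta> h n x0 - X 1 x0))\<^sup>2)
     \<le> ennreal ((1 + t) * Pc\<^sup>2) + ennreal ((1 + 1 / t) * exp (2 * K1)) * Splus x0"
proof (cases "Splus x0 = \<infinity>")
  case True
  have "1 / t > 0" using t by simp
  then have "1 + 1 / t > 0" by linarith
  then have "ennreal ((1 + 1 / t) * exp (2 * K1)) \<noteq> 0" by simp
  then show ?thesis using True by (simp add: ennreal_mult_top)
next
  case False
  define N where "N = norm (euler phi\<theta> h n x0 - X 1 x0)"
  define F where "F = integral {0..1} (f x0)"
  define S where "S = enn2real (Splus x0)"
  have fi: "f x0 integrable_on {0..1}" and FS: "F\<^sup>2 \<le> S"
    using int_facts[OF False] by (auto simp: F_def S_def)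
  have F0: "F \<ge> 0" unfolding F_def using fi by (rule integral_nonneg) (simp add: f_def)
  have S0: "S \<ge> 0" by (simp add: S_def)
  have NP: "N \<le> Pc + exp K1 * F" unfolding N_def F_def by (rule pointwise_main[OF fi])
  have "N\<^sup>2 \<le> (Pc + exp K1 * F)\<^sup>2" using NP by (intro power_mono) (auto simp: N_def)
  also have "\<dots> \<le> (1 + t) * Pc\<^sup>2 + (1 + 1 / t) * (exp K1 * F)\<^sup>2"
  proof -
    have "0 \<le> (t * Pc - exp K1 * F)\<^sup>2 / t" using t by simp
    then have "2 * Pc * (exp K1 * F) \<le> t * Pc\<^sup>2 + (exp K1 * F)\<^sup>2 / t"
      using t by (simp add: field_simps power2_eq_square)
    then show ?thesis by (simp add: power2_sum algebra_simps add_divide_distrib)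
  qed
  also have "(exp K1 * F)\<^sup>2 = exp (2 * K1) * F\<^sup>2"
    by (simp add: power_mult_distrib power2_eq_square flip: exp_add)
  also have "(1 + 1 / t) * (exp (2 * K1) * F\<^sup>2) \<le> (1 + 1 / t) * (exp (2 * K1) * S)"
    using FS t by (intro mult_left_mono) auto
  finally have real_bd: "N\<^sup>2 \<le> (1 + t) * Pc\<^sup>2 + (1 + 1 / t) * exp (2 * K1) * S" by (simp add: mult.assoc)
  have "ennreal (N\<^sup>2) \<le> ennreal ((1 + t) * Pc\<^sup>2 + (1 + 1 / t) * exp (2 * K1) * S)"
    by (rule ennreal_leI[OF real_bd])
  also have "\<dots> = ennreal ((1 + t) * Pc\<^sup>2) + ennreal ((1 + 1 / t) * exp (2 * K1)) * ennreal S"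
    using t S0 by (simp add: ennreal_plus ennreal_mult)
  also have "ennreal S = Splus x0" using False by (simp add: S_def top.not_eq_extremum)
  finally show ?thesis by (simp add: N_def)
qed

end

lemma ind_fst_meas: "(\<lambda>p::real \<times> 'b::second_countable_topology. indicator {0..1} (fst p) :: ennreal) \<in> borel_measurable borel"
proof -
  have "fst \<in> borel_measurable (borel :: (real \<times> 'b) measure)"
    by (rule borel_measurable_continuous_onI) (auto intro!: continuous_intros)
  from measurable_compose[OF this borel_measurable_indicator[of "{0..1::real}" borel]] show ?thesis by simp
qed

lemma ind_snd_meas: "(\<lambda>p::'b::second_countable_topology \<times> real. indicator {0..1} (snd p) :: ennreal) \<in> borel_measurable borel"
proof -
  have "snd \<in> borel_measurable (borel :: ('b \<times> real) measure)"
    by (rule borel_measurable_continuous_onI) (auto intro!: continuous_intros)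
  from measurable_compose[OF this borel_measurable_indicator[of "{0..1::real}" borel]] show ?thesis by simp
qed

lemma pair_borel_meas:
  fixes g :: "('b::second_countable_topology \<times> 'c::second_countable_topology) \<Rightarrow> ennreal"
  assumes g: "g \<in> borel_measurable borel" and s1: "sets M1 = sets borel" and s2: "sets M2 = sets borel"
  shows "g \<in> borel_measurable (M1 \<Otimes>\<^sub>M M2)"
proof -
  have "sets (M1 \<Otimes>\<^sub>M M2) = sets (borel \<Otimes>\<^sub>M borel :: ('b \<times> 'c) measure)"
    using s1 s2 by (rule sets_pair_measure_cong)
  also have "\<dots> = sets (borel :: ('b \<times> 'c) measure)" by (metis borel_prod)
  finally have "sets (M1 \<Otimes>\<^sub>M M2) = sets (borel :: ('b \<times> 'c) measure)" .
  then show ?thesis using g by (simp cong: measurable_cong_sets)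
qed

context setting
begin

lemma M_prob: "prob_space (density lborel p0)"
proof (rule prob_spaceI)
  have "emeasure (density lborel p0) (space (density lborel p0)) = (\<integral>\<^sup>+ x. ennreal (p0 x) * indicator UNIV x \<partial>lborel)"
    by (subst emeasure_density) (use p0_meas in auto)
  also have "\<dots> = 1" using p0_total by simp
  finally show "emeasure (density lborel p0) (space (density lborel p0)) = 1" .
qed

lemma Xs_meas: "s \<in> {0..1} \<Longrightarrow> X s \<in> borel_measurable borel"
proof -
  assume s: "s \<in> {0..1}"
  have "continuous_on UNIV (\<lambda>x. X (cl (fst (s, x))) (snd (s, x)))"
    by (rule continuous_on_compose2[OF Xc_cont]) (auto intro!: continuous_intros)
  then have "continuous_on UNIV (X s)" using s by (simp add: cl_id)
  then show ?thesis by (rule borel_measurable_continuous_onI)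
qed

lemma phis_meas: "phi s \<in> borel_measurable borel"
proof -
  have p: "(\<lambda>y. (s, y)) \<in> borel_measurable borel"
    by (rule borel_measurable_continuous_onI) (auto intro!: continuous_intros)
  from measurable_compose[OF p phi_meas] show ?thesis by simp
qed

lemma Splus_eq: "Splus x0 = (\<integral>\<^sup>+ s. Gf (s, x0) * indicator {0..1} s \<partial>lborel)"
  unfolding Splus_def by (rule nn_integral_cong) (auto simp: Gf_def f_def cl_id indicator_def)

lemma E_bound:
  assumes t: "t > 0"
  shows "(\<integral>\<^sup>+ x. ennreal ((norm (euler phi\<theta> h n x - X 1 x))\<^sup>2) \<partial>density lborel p0)
     \<le> ennreal ((1 + t) * Pc\<^sup>2) + ennreal ((1 + 1 / t) * exp (2 * K1)) * ennreal (\<delta>\<^sup>2)"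
proof -
  let ?M = "density lborel p0"
  interpret P: prob_space ?M by (rule M_prob)
  have sf: "sigma_finite_measure ?M" by (rule prob_space_imp_sigma_finite[OF M_prob])
  interpret PS: pair_sigma_finite lborel ?M
    by (simp add: pair_sigma_finite_def sf lborel.sigma_finite_measure_axioms)
  have sM: "sets ?M = sets borel" by simp
  define H where "H p = Gf (snd p, fst p) * indicator {0..1} (snd p)" for p :: "'a \<times> real"
  have Hb: "H \<in> borel_measurable borel"
  proof -
    have sw: "(\<lambda>p::'a \<times> real. (snd p, fst p)) \<in> borel_measurable borel"
      by (rule borel_measurable_continuous_onI) (auto intro!: continuous_intros)
    have "(\<lambda>p::'a \<times> real. Gf (snd p, fst p)) \<in> borel_measurable borel"
      using measurable_compose[OF sw Gf_meas] by simp
    from borel_measurable_times_ennreal[OF this ind_snd_meas] show ?thesis unfolding H_def[abs_def] .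
  qed
  have Hm: "case_prod (\<lambda>x s. Gf (s, x) * indicator {0..1} s) \<in> borel_measurable (?M \<Otimes>\<^sub>M lborel)"
    using pair_borel_meas[OF Hb sM, of lborel] by (simp add: H_def[abs_def] case_prod_beta' sets_lborel)
  have Spm: "Splus \<in> borel_measurable ?M"
    unfolding Splus_eq[abs_def] using lborel.borel_measurable_nn_integral[OF Hm] .
  have "(\<integral>\<^sup>+ x. ennreal ((norm (euler phi\<theta> h n x - X 1 x))\<^sup>2) \<partial>?M)
      \<le> (\<integral>\<^sup>+ x. ennreal ((1 + t) * Pc\<^sup>2) + ennreal ((1 + 1 / t) * exp (2 * K1)) * Splus x \<partial>?M)"
    by (rule nn_integral_mono) (rule pw_enn[OF t])
  also have "\<dots> = ennreal ((1 + t) * Pc\<^sup>2) + ennreal ((1 + 1 / t) * exp (2 * K1)) * (\<integral>\<^sup>+ x. Splus x \<partial>?M)"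
  proof -
    have e1: "emeasure ?M UNIV = 1" using P.emeasure_space_1 by simp
    show ?thesis using Spm by (simp add: nn_integral_add nn_integral_cmult e1)
  qed
  also have "(\<integral>\<^sup>+ x. Splus x \<partial>?M) = ennreal (\<delta>\<^sup>2)"
  proof -
    have Hm2: "case_prod (\<lambda>s x. Gf (s, x) * indicator {0..1} s) \<in> borel_measurable (lborel \<Otimes>\<^sub>M ?M)"
    proof -
      have "(\<lambda>p::real \<times> 'a. Gf p * indicator {0..1} (fst p)) \<in> borel_measurable borel"
        by (rule borel_measurable_times_ennreal[OF Gf_meas ind_fst_meas])
      from pair_borel_meas[OF this, of lborel ?M] show ?thesis by (simp add: case_prod_beta' sets_lborel)
    qed
    have "(\<integral>\<^sup>+ x. Splus x \<partial>?M) = (\<integral>\<^sup>+ x. (\<integral>\<^sup>+ s. Gf (s, x) * indicator {0..1} s \<partial>lborel) \<partial>?M)"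
      by (simp add: Splus_eq)
    also have "\<dots> = (\<integral>\<^sup>+ s. (\<integral>\<^sup>+ x. Gf (s, x) * indicator {0..1} s \<partial>?M) \<partial>lborel)"
      by (rule PS.Fubini'[OF Hm2])
    also have "\<dots> = (\<integral>\<^sup>+ s \<in> {0..1}. (\<integral>\<^sup>+ x. ennreal ((norm (phi\<theta> s x - phi s x))\<^sup>2)
             \<partial>(distr ?M borel (X s))) \<partial>lborel)"
    proof (rule nn_integral_cong)
      fix s :: real
      show "(\<integral>\<^sup>+ x. Gf (s, x) * indicator {0..1} s \<partial>?M) =
        (\<integral>\<^sup>+ x. ennreal ((norm (phi\<theta> s x - phi s x))\<^sup>2) \<partial>distr ?M borel (X s)) * indicator {0..1} s"
      proof (cases "s \<in> {0..1}")
        case True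
        have Xm: "X s \<in> measurable ?M borel" using Xs_meas[OF True] by simp
        have gm: "(\<lambda>x. ennreal ((norm (phi\<theta> s x - phi s x))\<^sup>2)) \<in> borel_measurable (distr ?M borel (X s))"
        proof -
          have "phi\<theta> s \<in> borel_measurable borel"
            by (rule borel_measurable_continuous_onI[OF phi\<theta>_cont[OF True]])
          then show ?thesis using phis_meas[of s] by simp
        qed
        have "(\<integral>\<^sup>+ x. ennreal ((norm (phi\<theta> s x - phi s x))\<^sup>2) \<partial>distr ?M borel (X s))
            = (\<integral>\<^sup>+ x. ennreal ((norm (phi\<theta> s (X s x) - phi s (X s x)))\<^sup>2) \<partial>?M)"
          by (rule nn_integral_distr[OF Xm gm])
        then show ?thesis using True by (simp add: Gf_def cl_id)
      qed simp
    qed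
    also have "\<dots> = ennreal (\<delta>\<^sup>2)" by (rule delta_def)
    finally show ?thesis .
  qed
  finally show ?thesis .
qed

end


context setting
begin

lemma E_final:
  "(\<integral>\<^sup>+ x. ennreal ((norm (euler phi\<theta> h n x - X 1 x))\<^sup>2) \<partial>density lborel p0)
     \<le> ennreal ((Pc + exp K1 * \<delta>)\<^sup>2)"
proof -
  define E where "E = (\<integral>\<^sup>+ x. ennreal ((norm (euler phi\<theta> h n x - X 1 x))\<^sup>2) \<partial>density lborel p0)"
  define P where "P = Pc"
  define a where "a = exp K1 * \<delta>"
  have P0: "P \<ge> 0" using Pc_nonneg by (simp add: P_def)
  have a0: "a \<ge> 0" using delta_nonneg by (simp add: a_def)
  have a2: "exp (2 * K1) * \<delta>\<^sup>2 = a\<^sup>2"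
    by (simp add: a_def power_mult_distrib power2_eq_square flip: exp_add)
  have bnd: "E \<le> ennreal ((P + a)\<^sup>2 + 2 * \<epsilon> * (P + a))" if eps: "\<epsilon> > 0" for \<epsilon>
  proof -
    define t where "t = (a + \<epsilon>) / (P + \<epsilon>)"
    have Pe: "P + \<epsilon> > 0" and ae: "a + \<epsilon> > 0" using P0 a0 eps by auto
    have t0: "t > 0" unfolding t_def using Pe ae by simp
    have t1: "1 + t = (P + a + 2 * \<epsilon>) / (P + \<epsilon>)" unfolding t_def using Pe by (simp add: field_simps)
    have t2: "1 + 1 / t = (P + a + 2 * \<epsilon>) / (a + \<epsilon>)" unfolding t_def using Pe ae by (simp add: field_simps)
    have b1: "(1 + t) * P\<^sup>2 \<le> (P + a + 2 * \<epsilon>) * P"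
    proof -
      have "(1 + t) * P\<^sup>2 = ((P + a + 2 * \<epsilon>) * P) * (P / (P + \<epsilon>))"
        unfolding t1 by (simp add: power2_eq_square)
      also have "\<dots> \<le> ((P + a + 2 * \<epsilon>) * P) * 1"
        using P0 a0 eps Pe by (intro mult_left_mono) auto
      finally show ?thesis by simp
    qed
    have b2: "(1 + 1 / t) * a\<^sup>2 \<le> (P + a + 2 * \<epsilon>) * a"
    proof -
      have "(1 + 1 / t) * a\<^sup>2 = ((P + a + 2 * \<epsilon>) * a) * (a / (a + \<epsilon>))"
        unfolding t2 by (simp add: power2_eq_square)
      also have "\<dots> \<le> ((P + a + 2 * \<epsilon>) * a) * 1"
        using P0 a0 eps ae by (intro mult_left_mono) auto
      finally show ?thesis by simp
    qed
    have "E \<le> ennreal ((1 + t) * Pc\<^sup>2) + ennreal ((1 + 1 / t) * exp (2 * K1)) * ennreal (\<delta>\<^sup>2)"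
      unfolding E_def by (rule E_bound[OF t0])
    also have "\<dots> = ennreal ((1 + t) * P\<^sup>2 + (1 + 1 / t) * a\<^sup>2)"
      using t0 by (simp add: P_def ennreal_plus ennreal_mult a2[symmetric] mult.assoc)
    also have "\<dots> \<le> ennreal ((P + a)\<^sup>2 + 2 * \<epsilon> * (P + a))"
      using b1 b2 by (intro ennreal_leI) (simp add: power2_eq_square algebra_simps)
    finally show ?thesis .
  qed
  have fin: "E \<noteq> \<infinity>" using bnd[of 1] by (auto simp: top_unique)
  have "enn2real E \<le> (P + a)\<^sup>2"
  proof (rule field_le_epsilon)
    fix e :: real assume e: "e > 0"
    define \<epsilon> where "\<epsilon> = e / (2 * (P + a) + 1)"
    have d: "2 * (P + a) + 1 > 0" using P0 a0 by simp
    have eps: "\<epsilon> > 0" unfolding \<epsilon>_def using e d by simp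
    have "2 * \<epsilon> * (P + a) = e * (2 * (P + a) / (2 * (P + a) + 1))" unfolding \<epsilon>_def using d by (simp add: field_simps)
    also have "\<dots> \<le> e * 1" using e d P0 a0 by (intro mult_left_mono) auto
    finally have ee: "2 * \<epsilon> * (P + a) \<le> e" by simp
    have "enn2real E \<le> enn2real (ennreal ((P + a)\<^sup>2 + 2 * \<epsilon> * (P + a)))"
      by (rule enn2real_mono[OF bnd[OF eps]]) simp
    also have "\<dots> = (P + a)\<^sup>2 + 2 * \<epsilon> * (P + a)"
      using P0 a0 eps by (intro enn2real_ennreal) (intro add_nonneg_nonneg mult_nonneg_nonneg, auto)
    finally have "enn2real E \<le> (P + a)\<^sup>2 + 2 * \<epsilon> * (P + a)" .
    then show "enn2real E \<le> (P + a)\<^sup>2 + e" using ee by linarith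
  qed
  then have "ennreal (enn2real E) \<le> ennreal ((P + a)\<^sup>2)" by (rule ennreal_leI)
  moreover have "ennreal (enn2real E) = E" using fin by (simp add: top.not_eq_extremum)
  ultimately have "E \<le> ennreal ((P + a)\<^sup>2)" by simp
  then show ?thesis by (simp add: E_def P_def a_def)
qed

end


context setting
begin

lemma Pc_le: "Pc \<le> sqrt (1 / real n) * sqrt ((1/2 * K2\<^sup>2 + 17/2 * K1\<^sup>2 * K3\<^sup>2 + 5 * K1 * K2 * K3)
                                        * (exp (1 + K1\<^sup>2) - 1) / (1 + K1\<^sup>2))"
proof -
  define Cc where "Cc = 1/2 * K2\<^sup>2 + 17/2 * K1\<^sup>2 * K3\<^sup>2 + 5 * K1 * K2 * K3"
  have G: "Cc * (exp (1 + K1\<^sup>2) - 1) / (1 + K1\<^sup>2) = Cc * \<Gamma>" by (simp add: \<Gamma>_def \<alpha>_def)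
  have g3: "3 * \<Gamma> > 0" using \<Gamma>_pos by simp
  have lam2: "lam\<^sup>2 = h\<^sup>2 / (3 * \<Gamma>)" unfolding lam_def using g3 by (simp add: power_divide)
  have hl: "h\<^sup>2 / (3 * lam) = lam * \<Gamma>"
  proof -
    have "h\<^sup>2 = lam\<^sup>2 * (3 * \<Gamma>)" using lam2 g3 by simp
    then show ?thesis using lam_pos \<Gamma>_pos by (simp add: field_simps power2_eq_square)
  qed
  have Pc_eq: "Pc = \<kappa> * lam * \<Gamma>" unfolding Pc_def hl by simp
  have Pc2: "Pc\<^sup>2 = \<kappa>\<^sup>2 * h\<^sup>2 * \<Gamma> / 3"
    unfolding Pc_eq using g3 lam2 by (simp add: power_mult_distrib field_simps power2_eq_square)
  have K: "K1 \<ge> 0" "K2 \<ge> 0" "K3 \<ge> 0" using K1_nonneg K2_nonneg K3_nonneg by auto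
  have C3: "\<kappa>\<^sup>2 \<le> 3 * Cc"
  proof -
    have "3 * Cc - \<kappa>\<^sup>2 = 1/2 * K2\<^sup>2 + 49/2 * (K1 * K3)\<^sup>2 + 13 * K1 * K2 * K3"
      by (simp add: Cc_def \<kappa>_def power2_eq_square algebra_simps)
    also have "\<dots> \<ge> 0" using K by (intro add_nonneg_nonneg mult_nonneg_nonneg) auto
    finally show ?thesis by simp
  qed
  have h1: "h \<le> 1" using n_pos by (simp add: h_def)
  have "\<kappa>\<^sup>2 * h \<le> \<kappa>\<^sup>2 * 1" using h1 by (intro mult_left_mono) auto
  then have kh: "\<kappa>\<^sup>2 * h \<le> 3 * Cc" using C3 by simp
  have "Pc\<^sup>2 = (\<kappa>\<^sup>2 * h) * (h * \<Gamma> / 3)" unfolding Pc2 by (simp add: power2_eq_square)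
  also have "\<dots> \<le> (3 * Cc) * (h * \<Gamma> / 3)"
    using kh h_pos \<Gamma>_pos by (intro mult_right_mono) auto
  also have "\<dots> = h * (Cc * \<Gamma>)" by simp
  finally have "Pc \<le> sqrt (h * (Cc * \<Gamma>))" by (rule real_le_rsqrt)
  also have "sqrt (h * (Cc * \<Gamma>)) = sqrt (1 / real n) * sqrt (Cc * (exp (1 + K1\<^sup>2) - 1) / (1 + K1\<^sup>2))"
    by (simp only: real_sqrt_mult G h_def)
  finally show ?thesis by (simp only: Cc_def)
qed

lemma delta_le: "exp K1 * \<delta> \<le> \<delta> * sqrt (exp (1 + 2 * K1))"
proof -
  have "exp K1 = sqrt (exp (2 * K1))"
    by (rule real_sqrt_unique[symmetric]) (auto simp: power2_eq_square simp flip: exp_add)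
  also have "\<dots> \<le> sqrt (exp (1 + 2 * K1))" by simp
  finally show ?thesis using delta_nonneg by (simp add: mult.commute mult_left_mono)
qed

lemma W2_bound:
  "W2 (distr (density lborel p0) borel (euler phi\<theta> (1 / real n) n))
            (distr (density lborel p0) borel (X 1))
         \<le> ennreal (\<delta> * sqrt (exp (1 + 2 * K1))
              + sqrt (1 / real n) * sqrt ((1/2 * K2\<^sup>2 + 17/2 * K1\<^sup>2 * K3\<^sup>2 + 5 * K1 * K2 * K3)
                                        * (exp (1 + K1\<^sup>2) - 1) / (1 + K1\<^sup>2)))"
proof -
  let ?M = "density lborel p0"
  let ?E = "euler phi\<theta> h n"
  define R where "R = \<delta> * sqrt (exp (1 + 2 * K1))
              + sqrt (1 / real n) * sqrt ((1/2 * K2\<^sup>2 + 17/2 * K1\<^sup>2 * K3\<^sup>2 + 5 * K1 * K2 * K3)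
                                        * (exp (1 + K1\<^sup>2) - 1) / (1 + K1\<^sup>2))"
  interpret P: prob_space ?M by (rule M_prob)
  have Ec: "continuous_on UNIV ?E" by (rule euler_cont) simp
  have pc: "continuous_on UNIV (\<lambda>x. (?E x, X 1 x))"
    using Ec X1_cont by (intro continuous_on_Pair)
  have pm: "(\<lambda>x. (?E x, X 1 x)) \<in> measurable ?M borel"
    using borel_measurable_continuous_onI[OF pc] by simp
  define \<gamma> where "\<gamma> = distr ?M borel (\<lambda>x. (?E x, X 1 x))"
  have fstm: "fst \<in> measurable (borel :: ('a \<times> 'a) measure) borel"
    by (rule borel_measurable_continuous_onI) (auto intro!: continuous_intros)
  have sndm: "snd \<in> measurable (borel :: ('a \<times> 'a) measure) borel"
    by (rule borel_measurable_continuous_onI) (auto intro!: continuous_intros)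
  have coup: "\<gamma> \<in> couplings (distr ?M borel ?E) (distr ?M borel (X 1))"
    unfolding couplings_def
  proof (intro CollectI conjI)
    show "prob_space \<gamma>" unfolding \<gamma>_def by (rule P.prob_space_distr[OF pm])
    show "sets \<gamma> = sets borel" by (simp add: \<gamma>_def)
    show "distr \<gamma> borel fst = distr ?M borel ?E"
      unfolding \<gamma>_def by (subst distr_distr[OF fstm pm]) (simp add: comp_def)
    show "distr \<gamma> borel snd = distr ?M borel (X 1)"
      unfolding \<gamma>_def by (subst distr_distr[OF sndm pm]) (simp add: comp_def)
  qed
  have W2sq: "W2_sq (distr ?M borel ?E) (distr ?M borel (X 1)) \<le> ennreal (R\<^sup>2)"
  proof -
    have "W2_sq (distr ?M borel ?E) (distr ?M borel (X 1)) \<le> (\<integral>\<^sup>+ z. ennreal ((norm (fst z - snd z))\<^sup>2) \<partial>\<gamma>)"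
      unfolding W2_sq_def by (rule INF_lower[OF coup])
    also have "\<dots> = (\<integral>\<^sup>+ x. ennreal ((norm (?E x - X 1 x))\<^sup>2) \<partial>?M)"
    proof -
      have gm: "(\<lambda>z::'a \<times> 'a. ennreal ((norm (fst z - snd z))\<^sup>2)) \<in> borel_measurable \<gamma>"
      proof -
        have "continuous_on UNIV (\<lambda>z::'a \<times> 'a. (norm (fst z - snd z))\<^sup>2)"
          by (auto intro!: continuous_intros)
        then have "(\<lambda>z::'a \<times> 'a. (norm (fst z - snd z))\<^sup>2) \<in> borel_measurable borel"
          by (rule borel_measurable_continuous_onI)
        then show ?thesis by (simp add: \<gamma>_def)
      qed
      show ?thesis unfolding \<gamma>_def using nn_integral_distr[OF pm gm[unfolded \<gamma>_def]] by simp
    qed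
    also have "\<dots> \<le> ennreal ((Pc + exp K1 * \<delta>)\<^sup>2)" by (rule E_final)
    also have "\<dots> \<le> ennreal (R\<^sup>2)"
    proof (rule ennreal_leI, rule power_mono)
      show "Pc + exp K1 * \<delta> \<le> R" unfolding R_def using Pc_le delta_le by linarith
      show "0 \<le> Pc + exp K1 * \<delta>" using Pc_nonneg delta_nonneg by simp
    qed
    finally show ?thesis .
  qed
  have "0 \<le> \<delta> * sqrt (exp (1 + 2 * K1))" using delta_nonneg by simp
  then have R0: "R \<ge> 0" unfolding R_def using Pc_le Pc_nonneg by linarith
  have "W2 (distr ?M borel ?E) (distr ?M borel (X 1)) \<le> ennreal R"
  proof -
    let ?S = "W2_sq (distr ?M borel ?E) (distr ?M borel (X 1))"
    have fin: "?S \<noteq> \<infinity>" using W2sq by (auto simp: top_unique)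
    have "enn2real ?S \<le> enn2real (ennreal (R\<^sup>2))" by (rule enn2real_mono[OF W2sq]) simp
    then have "enn2real ?S \<le> R\<^sup>2" by simp
    then have "sqrt (enn2real ?S) \<le> R" using R0 by (simp add: real_sqrt_le_iff real_le_lsqrt)
    then show ?thesis unfolding W2_def using fin by (simp add: ennreal_leI)
  qed
  then show ?thesis by (simp add: R_def h_def)
qed

end

theorem theorem4p2:
  fixes p0 :: "'a::euclidean_space \<Rightarrow> real"
    and phi phi\<theta> :: "real \<Rightarrow> 'a \<Rightarrow> 'a"
    and X :: "real \<Rightarrow> 'a \<Rightarrow> 'a"
    and \<delta> K1 K2 K3 :: real
    and n :: nat
  assumes p0_meas: "p0 \<in> borel_measurable borel"
    and p0_nonneg: "\<And>x. p0 x \<ge> 0"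
    and p0_total: "(\<integral>\<^sup>+ x. ennreal (p0 x) \<partial>lborel) = 1"
    and phi_meas: "(\<lambda>(t, x). phi t x) \<in> borel_measurable borel"
    and flow_init: "\<And>x. X 0 x = x"
    and flow_ode: "\<And>x t. t \<in> {0..1} \<Longrightarrow>
        ((\<lambda>s. X s x) has_vector_derivative phi t (X t x)) (at t within {0..1})"
    and delta_nonneg: "\<delta> \<ge> 0"
    and delta_def: "(\<integral>\<^sup>+ t \<in> {0..1}.
          (\<integral>\<^sup>+ x. ennreal ((norm (phi\<theta> t x - phi t x))\<^sup>2)
             \<partial>(distr (density lborel p0) borel (X t))) \<partial>lborel) = ennreal (\<delta>\<^sup>2)"
    and n_pos: "n \<ge> 1"
    and lip_phi: "\<And>t x1 x2. t \<in> {0..1} \<Longrightarrow> norm (phi t x1 - phi t x2) \<le> K1 * norm (x1 - x2)"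
    and lip_phi\<theta>: "\<And>t x1 x2. t \<in> {0..1} \<Longrightarrow> norm (phi\<theta> t x1 - phi\<theta> t x2) \<le> K1 * norm (x1 - x2)"
    and lip_time: "\<And>x t1 t2. t1 \<in> {0..1} \<Longrightarrow> t2 \<in> {0..1} \<Longrightarrow>
        norm (phi\<theta> t1 x - phi\<theta> t2 x) \<le> K2 * \<bar>t2 - t1\<bar>"
    and bounded: "\<And>x t. t \<in> {0..1} \<Longrightarrow> norm (phi\<theta> t x) \<le> K3"
  shows "W2 (distr (density lborel p0) borel (euler phi\<theta> (1 / real n) n))
            (distr (density lborel p0) borel (X 1))
         \<le> ennreal (\<delta> * sqrt (exp (1 + 2 * K1))
              + sqrt (1 / real n) * sqrt ((1/2 * K2\<^sup>2 + 17/2 * K1\<^sup>2 * K3\<^sup>2 + 5 * K1 * K2 * K3)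
                                        * (exp (1 + K1\<^sup>2) - 1) / (1 + K1\<^sup>2)))"
proof -
  interpret setting p0 phi phi\<theta> X \<delta> K1 K2 K3 n
    by (unfold_locales; fact assms)
  show ?thesis by (rule W2_bound)
qed


end
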